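(* Let $G$ be a connected simple graph without bridges whose edge set is identified with $[d+1]$, let $B_1,\dots,B_n$ be the bases (spanning trees) of its graphic matroid, all of cardinality $k$, and let $P=\operatorname{tconv}(V)$ with $V=(-e_{B_1},\dots,-e_{B_n})$. Then: (1) the set of pseudovertices of $P$ is $\{-e_J: J=\bigcup_{i\in I}B_i \text{ for some } I\subseteq[n]\}$; (2) the set of pseudovertices of the tropical standard simplex $\Delta^d=\operatorname{tconv}\{-e_1,\dots,-e_{d+1}\}$ is $\{-e_J: J\subseteq[d+1],\ 1\le|J|\le d\}$; (3) let $(T^{(0)}_1,\dots,T^{(0)}_{d+1})=\operatorname{type}_V(\mathbf{0})$, and let $-e_J$ be a pseudovertex of $P$ with $[d+1]\setminus J=\{i_1,\dots,i_r\}$; then $\operatorname{type}_V(-e_J)=(T_1,\dots,T_{d+1})$ where $$T_j=\begin{cases}T^{(0)}_j\setminus\big(T^{(0)}_{i_1}\cup\cdots\cup T^{(0)}_{i_r}\big) & \text{if } j\in J,\\ T^{(0)}_j\cup\big((T^{(0)}_{i_1})^C\cap\cdots\cap(T^{(0)}_{i_r})^C\big) & \text{otherwise,}\end{cases}$$ with complements taken in $[n]$.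
   Context: Tropical arithmetic is min-plus; $\mathbb{T}^d=\mathbb{R}^{d+1}/\mathbb{R}(1,\dots,1)$; $\operatorname{tconv}\{v_1,\dots,v_n\}=\{\bigoplus_l\lambda_l\odot v_l:\lambda_l\in\mathbb{R}\}$; $e_J=\sum_{i\in J}e_i$, and $\mathbf{0}$ is the origin. For $m\in[d+1]$ let $\bar S_m=\{\xi\in\mathbb{T}^d:\xi_m=\min_i\xi_i\}$. For generators $V=(v_1,\dots,v_n)$ and $x\in\mathbb{T}^d$, $\operatorname{type}_V(x)=(T_1,\dots,T_{d+1})$ with $T_m=\{l\in[n]:v_l\in x+\bar S_m\}$. The cells $\{x:\operatorname{type}_V(x)=\mathcal{T}\}$ have closures forming a polyhedral subdivision $\mathcal{C}_V$ of $\mathbb{T}^d$ (the tropical complex); the pseudovertices of the tropical polytope $\operatorname{tconv}(V)$ are the zero-dimensional cells of $\mathcal{C}_V$. *)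

theory Defs
  imports "HOL-Analysis.Analysis"
begin

text \<open>Points of the tropical torus T^d = R^(d+1)/R(1,...,1) are represented by
  representatives in real^'e, where the finite type 'e plays the role of [d+1]
  (so d + 1 = CARD('e)).\<close>

definition ones :: "real^'e" where
  "ones = (\<chi> i. 1)"

definition tline :: "real^'e \<Rightarrow> (real^'e) set" where
  "tline p = {p + c *\<^sub>R ones | c. True}"

definition teq :: "real^'e \<Rightarrow> real^'e \<Rightarrow> bool" where
  "teq x y \<longleftrightarrow> (\<exists>c. x = y + c *\<^sub>R ones)"

definition eJ :: "'e set \<Rightarrow> real^'e" where
  "eJ J = (\<chi> i. if i \<in> J then 1 else 0)"

definition tconv :: "'i set \<Rightarrow> ('i \<Rightarrow> real^'e) \<Rightarrow> (real^'e::finite) set" where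
  "tconv L v = {x. \<exists>lam::'i \<Rightarrow> real. \<forall>i. x $ i = Min ((\<lambda>l. lam l + v l $ i) ` L)}"

definition Sbar :: "'e::finite \<Rightarrow> (real^'e) set" where
  "Sbar m = {\<xi>. \<xi> $ m = Min (range (\<lambda>i. \<xi> $ i))}"

definition ttype :: "'i set \<Rightarrow> ('i \<Rightarrow> real^'e) \<Rightarrow> real^'e \<Rightarrow> ('e::finite \<Rightarrow> 'i set)" where
  "ttype L v x = (\<lambda>m. {l \<in> L. v l \<in> (\<lambda>\<xi>. x + \<xi>) ` Sbar m})"

definition tcell :: "'i set \<Rightarrow> ('i \<Rightarrow> real^'e) \<Rightarrow> ('e::finite \<Rightarrow> 'i set) \<Rightarrow> (real^'e) set" where
  "tcell L v T = {x. ttype L v x = T}"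

definition tcomplex_cells :: "'i set \<Rightarrow> ('i \<Rightarrow> real^'e) \<Rightarrow> (real^'e::finite) set set" where
  "tcomplex_cells L v = {closure (tcell L v T) | T. tcell L v T \<noteq> {}}"

text \<open>Pseudovertices: zero-dimensional cells of C_V, i.e. cells which are a single point of T^d
  (a single line p + R(1,...,1) in the representation).\<close>
definition pseudovertex :: "'i set \<Rightarrow> ('i \<Rightarrow> real^'e) \<Rightarrow> real^'e::finite \<Rightarrow> bool" where
  "pseudovertex L v p \<longleftrightarrow> tline p \<in> tcomplex_cells L v"

text \<open>A graph with vertex set Vx and edge set UNIV :: 'e set; ends e is the set of endpoints.\<close>
definition simple_graph :: "'v set \<Rightarrow> ('e \<Rightarrow> 'v set) \<Rightarrow> bool" where
  "simple_graph Vx ends \<longleftrightarrow> finite Vx \<and> (\<forall>e. ends e \<subseteq> Vx \<and> card (ends e) = 2) \<and> inj ends"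

definition adj :: "('e \<Rightarrow> 'v set) \<Rightarrow> 'e set \<Rightarrow> ('v \<times> 'v) set" where
  "adj ends F = {(x, y). \<exists>e\<in>F. ends e = {x, y}}"

definition conn :: "('e \<Rightarrow> 'v set) \<Rightarrow> 'e set \<Rightarrow> 'v \<Rightarrow> 'v \<Rightarrow> bool" where
  "conn ends F x y \<longleftrightarrow> (x, y) \<in> (adj ends F)\<^sup>*"

definition connected_graph :: "'v set \<Rightarrow> ('e \<Rightarrow> 'v set) \<Rightarrow> bool" where
  "connected_graph Vx ends \<longleftrightarrow> Vx \<noteq> {} \<and> (\<forall>x\<in>Vx. \<forall>y\<in>Vx. conn ends UNIV x y)"

definition is_bridge :: "'v set \<Rightarrow> ('e \<Rightarrow> 'v set) \<Rightarrow> 'e \<Rightarrow> bool" where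
  "is_bridge Vx ends e \<longleftrightarrow>
     (\<exists>x\<in>Vx. \<exists>y\<in>Vx. conn ends UNIV x y \<and> \<not> conn ends (UNIV - {e}) x y)"

definition degree_in :: "('e \<Rightarrow> 'v set) \<Rightarrow> 'e set \<Rightarrow> 'v \<Rightarrow> nat" where
  "degree_in ends C x = card {e \<in> C. x \<in> ends e}"

definition is_cycle :: "('e::finite \<Rightarrow> 'v set) \<Rightarrow> 'e set \<Rightarrow> bool" where
  "is_cycle ends C \<longleftrightarrow> C \<noteq> {}
     \<and> (\<forall>x. degree_in ends C x = 0 \<or> degree_in ends C x = 2)
     \<and> (\<forall>x \<in> \<Union>(ends ` C). \<forall>y \<in> \<Union>(ends ` C). conn ends C x y)"

definition graphic_indep :: "('e::finite \<Rightarrow> 'v set) \<Rightarrow> 'e set \<Rightarrow> bool" where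
  "graphic_indep ends F \<longleftrightarrow> \<not> (\<exists>C \<subseteq> F. is_cycle ends C)"

definition graphic_basis :: "('e::finite \<Rightarrow> 'v set) \<Rightarrow> 'e set \<Rightarrow> bool" where
  "graphic_basis ends B \<longleftrightarrow> graphic_indep ends B \<and> (\<forall>F. B \<subset> F \<longrightarrow> \<not> graphic_indep ends F)"

end

theory Submission
  imports Defs
begin


definition amin :: "real^'e::finite \<Rightarrow> 'e set" where
  "amin u = {m. \<forall>j. u$m \<le> u$j}"

lemma amin_mem: "m \<in> amin u \<longleftrightarrow> (\<forall>j. u$m \<le> u$j)"
  by (simp add: amin_def)

lemma ex_amin: "\<exists>a. a \<in> amin (u::real^'e::finite)"
proof -
  have "Min (range (\<lambda>i. u$i)) \<in> range (\<lambda>i. u$i)" by (rule Min_in) auto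
  then obtain a where a: "u$a = Min (range (\<lambda>i. u$i))" by (metis rangeE)
  have "\<forall>j. u$a \<le> u$j" unfolding a by (intro allI Min_le) auto
  thus ?thesis by (auto simp: amin_mem)
qed

lemma Sbar_iff: "\<xi> \<in> Sbar m \<longleftrightarrow> m \<in> amin \<xi>"
  unfolding Sbar_def amin_mem
  by (auto simp: eq_commute[of "\<xi>$m"] Min_eq_iff)

lemma ttype_alt: "ttype L v x = (\<lambda>m. {l\<in>L. m \<in> amin (v l - x)})"
proof -
  have "v l \<in> (\<lambda>\<xi>. x + \<xi>) ` Sbar m \<longleftrightarrow> m \<in> amin (v l - x)" for l m
  proof
    assume "v l \<in> (\<lambda>\<xi>. x + \<xi>) ` Sbar m"
    then obtain \<xi> where "\<xi> \<in> Sbar m" "v l = x + \<xi>" by auto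
    thus "m \<in> amin (v l - x)" by (simp add: Sbar_iff)
  next
    assume "m \<in> amin (v l - x)"
    hence "v l - x \<in> Sbar m" by (simp add: Sbar_iff)
    thus "v l \<in> (\<lambda>\<xi>. x + \<xi>) ` Sbar m" by (intro image_eqI[where x="v l - x"]) auto
  qed
  thus ?thesis unfolding ttype_def by auto
qed

lemma ttype_eq_iff: "ttype L v x = ttype L v y \<longleftrightarrow> (\<forall>l\<in>L. amin(v l - x) = amin(v l - y))"
  unfolding ttype_alt fun_eq_iff by blast

lemma amin_shift: "amin (u - c *\<^sub>R ones) = amin u"
  by (simp add: amin_def ones_def)

lemma teq_amin: "teq q p \<Longrightarrow> amin (w - q) = amin (w - p)"
proof -
  assume "teq q p"
  then obtain c where "q = p + c *\<^sub>R ones" by (auto simp: teq_def)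
  hence "w - q = (w - p) - c *\<^sub>R ones" by (simp add: algebra_simps)
  thus ?thesis by (metis amin_shift)
qed

lemma tline_eq: "tline p = {x. teq x p}"
  by (auto simp: tline_def teq_def)

lemma closed_tline: "closed (tline p)"
proof -
  have "tline p = (+) p ` span {ones}"
    by (auto simp: tline_def span_singleton)
  moreover have "closed (span {ones::real^'a})" by (simp add: closed_subspace)
  ultimately show ?thesis by (simp add: closed_translation)
qed

lemma teq_refl: "teq p p" by (auto simp: teq_def intro: exI[of _ 0])

lemma PV1: "pseudovertex L v p \<longleftrightarrow> (\<forall>x. (\<forall>l\<in>L. amin(v l - x) = amin(v l - p)) \<longrightarrow> teq x p)"
proof
  assume "pseudovertex L v p"
  then obtain T where T: "tline p = closure (tcell L v T)" "tcell L v T \<noteq> {}"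
    by (auto simp: pseudovertex_def tcomplex_cells_def)
  then obtain q where q: "q \<in> tcell L v T" by auto
  hence "q \<in> tline p" using T closure_subset by blast
  hence "teq q p" by (simp add: tline_eq)
  hence "ttype L v q = ttype L v p" by (simp add: ttype_eq_iff teq_amin)
  with q have TT: "T = ttype L v p" by (simp add: tcell_def)
  show "\<forall>x. (\<forall>l\<in>L. amin(v l - x) = amin(v l - p)) \<longrightarrow> teq x p"
  proof (intro allI impI)
    fix x assume "\<forall>l\<in>L. amin(v l - x) = amin(v l - p)"
    hence "x \<in> tcell L v T" by (simp add: TT tcell_def ttype_eq_iff)
    hence "x \<in> tline p" using T closure_subset by blast
    thus "teq x p" by (simp add: tline_eq)
  qed
next
  assume H: "\<forall>x. (\<forall>l\<in>L. amin(v l - x) = amin(v l - p)) \<longrightarrow> teq x p"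
  have "tcell L v (ttype L v p) = tline p"
    using H by (auto simp: tcell_def tline_eq ttype_eq_iff teq_amin)
  moreover have "p \<in> tline p" by (simp add: tline_eq teq_refl)
  ultimately show "pseudovertex L v p"
    unfolding pseudovertex_def tcomplex_cells_def
    by (auto intro!: exI[of _ "ttype L v p"] simp: closure_closed closed_tline)
qed



definition crit :: "'i set \<Rightarrow> ('i \<Rightarrow> real^'e) \<Rightarrow> real^'e::finite \<Rightarrow> bool" where
  "crit L v p \<longleftrightarrow> (\<forall>K. (\<forall>l\<in>L. amin(v l - p) \<subseteq> K \<or> amin(v l - p) \<inter> K = {}) \<longrightarrow> K = {} \<or> K = UNIV)"

lemma crit_det:
  assumes C: "crit L v p" and X: "\<forall>l\<in>L. amin(v l - x) = amin(v l - p)"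
  shows "teq x p"
proof -
  define c where "c = x - p"
  obtain k where "k \<in> amin (-c)" using ex_amin by blast
  hence k: "\<forall>j. c$j \<le> c$k" by (simp add: amin_mem)
  define K where "K = {i. c$i = c$k}"
  have "\<forall>l\<in>L. amin(v l - p) \<subseteq> K \<or> amin(v l - p) \<inter> K = {}"
  proof
    fix l assume l: "l \<in> L"
    have key: "c$i = c$m" if "i \<in> amin(v l - p)" "m \<in> amin(v l - p)" for i m
    proof -
      have "i \<in> amin(v l - x)" "m \<in> amin(v l - x)" using that X l by auto
      hence "(v l - x)$i \<le> (v l - x)$m" "(v l - x)$m \<le> (v l - x)$i"
        "(v l - p)$i \<le> (v l - p)$m" "(v l - p)$m \<le> (v l - p)$i"
        using that by (auto simp: amin_mem)
      thus ?thesis by (simp add: c_def)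
    qed
    show "amin(v l - p) \<subseteq> K \<or> amin(v l - p) \<inter> K = {}"
    proof (cases "amin(v l - p) \<inter> K = {}")
      case False
      then obtain i where i: "i \<in> amin(v l - p)" "i \<in> K" by blast
      have "amin(v l - p) \<subseteq> K"
      proof
        fix m assume "m \<in> amin(v l - p)"
        hence "c$m = c$i" using key i(1) by metis
        thus "m \<in> K" using i(2) by (simp add: K_def)
      qed
      thus ?thesis by simp
    qed simp
  qed
  moreover have "k \<in> K" by (simp add: K_def)
  ultimately have "K = UNIV" using C[unfolded crit_def, rule_format, of K] by blast
  hence cc: "\<forall>i. c$i = c$k" unfolding K_def by (metis (mono_tags) UNIV_I mem_Collect_eq)
  have "x = p + (c$k) *\<^sub>R ones"
  proof (subst vec_eq_iff, rule allI)
    fix i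
    have "x$i - p$i = c$k" using cc[rule_format, of i] by (simp add: c_def)
    thus "x$i = (p + (c$k) *\<^sub>R ones)$i" by (simp add: ones_def)
  qed
  thus ?thesis by (auto simp: teq_def)
qed

lemma amin_perturb:
  fixes u :: "real^'e::finite"
  assumes e: "\<epsilon> > 0" and AK: "amin u \<subseteq> K \<or> amin u \<inter> K = {}"
    and gap: "\<forall>i j. u$j < u$i \<longrightarrow> \<epsilon> < u$i - u$j"
  shows "amin (u - \<epsilon> *\<^sub>R eJ K) = amin u"
proof -
  obtain a where a: "a \<in> amin u" using ex_amin by blast
  have a': "\<forall>j. u$a \<le> u$j" using a by (simp add: amin_mem)
  have comp: "(u - \<epsilon> *\<^sub>R eJ K)$i = u$i - (if i\<in>K then \<epsilon> else 0)" for i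
    by (simp add: eJ_def)
  have nm: "u$a < u$m" if "m \<notin> amin u" for m
  proof (rule ccontr)
    assume "\<not> u$a < u$m"
    hence "\<forall>j. u$m \<le> u$j" using a' by (meson linorder_not_less order_trans)
    thus False using that by (simp add: amin_mem)
  qed
  show ?thesis
  proof (rule set_eqI)
    fix m
    show "m \<in> amin (u - \<epsilon> *\<^sub>R eJ K) \<longleftrightarrow> m \<in> amin u"
    proof (cases "amin u \<subseteq> K")
      case True
      hence aK: "a \<in> K" using a by auto
      show ?thesis
      proof
        assume "m \<in> amin (u - \<epsilon> *\<^sub>R eJ K)"
        hence H: "\<forall>j. u$m - (if m\<in>K then \<epsilon> else 0) \<le> u$j - (if j\<in>K then \<epsilon> else 0)"
          unfolding amin_mem comp .
        have "m \<in> K"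
        proof (rule ccontr)
          assume "m \<notin> K"
          with H[rule_format, of a] aK have "u$m \<le> u$a - \<epsilon>" by simp
          with a'[rule_format, of m] e show False by linarith
        qed
        with H[rule_format, of a] aK have "u$m \<le> u$a" by simp
        with a' show "m \<in> amin u" by (auto simp: amin_mem intro: order_trans)
      next
        assume m: "m \<in> amin u"
        hence "m \<in> K" using True by auto
        have "u$m - \<epsilon> \<le> u$j - (if j\<in>K then \<epsilon> else 0)" for j
          using m e by (simp add: amin_mem) (smt (verit))
        thus "m \<in> amin (u - \<epsilon> *\<^sub>R eJ K)" unfolding amin_mem comp using \<open>m \<in> K\<close> by simp
      qed
    next
      case False
      hence D: "amin u \<inter> K = {}" using AK by auto
      hence aK: "a \<notin> K" using a by auto
      show ?thesis
      proof
        assume "m \<in> amin (u - \<epsilon> *\<^sub>R eJ K)"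
        hence H: "\<forall>j. u$m - (if m\<in>K then \<epsilon> else 0) \<le> u$j - (if j\<in>K then \<epsilon> else 0)"
          unfolding amin_mem comp .
        have "m \<notin> K"
        proof
          assume mK: "m \<in> K"
          hence "m \<notin> amin u" using D by auto
          hence "u$a < u$m" by (rule nm)
          hence "\<epsilon> < u$m - u$a" using gap by auto
          moreover have "u$m - \<epsilon> \<le> u$a" using H[rule_format, of a] aK mK by simp
          ultimately show False by linarith
        qed
        hence "\<forall>j. u$m \<le> u$j" using H e by (smt (verit))
        thus "m \<in> amin u" by (simp add: amin_mem)
      next
        assume m: "m \<in> amin u"
        hence mK: "m \<notin> K" using D by auto
        have "u$m \<le> u$j - (if j\<in>K then \<epsilon> else 0)" for j
        proof (cases "j \<in> K")
          case True
          hence "j \<notin> amin u" using D by auto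
          hence "u$m < u$j" using m by (metis amin_mem linorder_not_less order_trans order_refl nm a' antisym)
          hence "\<epsilon> < u$j - u$m" using gap by auto
          thus ?thesis using True by simp
        next
          case False thus ?thesis using m by (simp add: amin_mem)
        qed
        thus "m \<in> amin (u - \<epsilon> *\<^sub>R eJ K)" unfolding amin_mem comp using mK by simp
      qed
    qed
  qed
qed

lemma det_crit:
  assumes fin: "finite L" and H: "\<forall>x. (\<forall>l\<in>L. amin(v l - x) = amin(v l - p)) \<longrightarrow> teq x p"
  shows "crit L v p"
  unfolding crit_def
proof (intro allI impI)
  fix K assume KP: "\<forall>l\<in>L. amin(v l - p) \<subseteq> K \<or> amin(v l - p) \<inter> K = {}"
  show "K = {} \<or> K = UNIV"
  proof (rule ccontr)
    assume "\<not> (K = {} \<or> K = UNIV)"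
    then obtain i0 j0 where i0: "i0 \<in> K" and j0: "j0 \<notin> K" by auto
    define E where "E = {(v l - p)$i - (v l - p)$j | l i j. l \<in> L \<and> (v l - p)$j < (v l - p)$i}"
    have "E \<subseteq> (\<lambda>(l,i,j). (v l - p)$i - (v l - p)$j) ` (L \<times> UNIV \<times> UNIV)"
    proof (rule subsetI)
      fix y assume "y \<in> E"
      then obtain l i j where "y = (v l - p)$i - (v l - p)$j" "l \<in> L" unfolding E_def by blast
      thus "y \<in> (\<lambda>(l,i,j). (v l - p)$i - (v l - p)$j) ` (L \<times> UNIV \<times> UNIV)"
        by (intro image_eqI[where x="(l,i,j)"]) auto
    qed
    hence finE: "finite E" by (rule finite_subset) (simp add: fin)
    define \<epsilon> where "\<epsilon> = Min (insert 1 E) / 2"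
    have Epos: "\<forall>a\<in>insert 1 E. 0 < a" unfolding E_def by auto
    have "0 < Min (insert 1 E)" using finE Epos by (simp add: Min_gr_iff)
    hence e: "\<epsilon> > 0" by (simp add: \<epsilon>_def)
    have gap: "\<forall>i j. (v l - p)$j < (v l - p)$i \<longrightarrow> \<epsilon> < (v l - p)$i - (v l - p)$j" if "l \<in> L" for l
    proof (intro allI impI)
      fix i j assume "(v l - p)$j < (v l - p)$i"
      hence "(v l - p)$i - (v l - p)$j \<in> insert 1 E" unfolding E_def using that by blast
      hence "Min (insert 1 E) \<le> (v l - p)$i - (v l - p)$j" using finE by simp
      thus "\<epsilon> < (v l - p)$i - (v l - p)$j" using \<open>0 < Min (insert 1 E)\<close> by (simp add: \<epsilon>_def)
    qed
    define x where "x = p + \<epsilon> *\<^sub>R eJ K"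
    have "\<forall>l\<in>L. amin(v l - x) = amin(v l - p)"
    proof
      fix l assume l: "l \<in> L"
      have "v l - x = (v l - p) - \<epsilon> *\<^sub>R eJ K" by (simp add: x_def algebra_simps)
      thus "amin(v l - x) = amin(v l - p)"
        using amin_perturb[OF e KP[rule_format, OF l] gap[OF l]] by metis
    qed
    with H have "teq x p" by blast
    then obtain c where "x = p + c *\<^sub>R ones" by (auto simp: teq_def)
    hence "x$i0 = p$i0 + c" "x$j0 = p$j0 + c" by (auto simp: ones_def)
    moreover have "x$i0 = p$i0 + \<epsilon>" "x$j0 = p$j0" using i0 j0 by (auto simp: x_def eJ_def)
    ultimately show False using e by linarith
  qed
qed

lemma PV_crit: "finite L \<Longrightarrow> pseudovertex L v p \<longleftrightarrow> crit L v p"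
proof -
  assume f: "finite L"
  show ?thesis
  proof
    assume "pseudovertex L v p" thus "crit L v p" using det_crit[OF f] PV1 by blast
  next
    assume "crit L v p" thus "pseudovertex L v p" using crit_det PV1 by blast
  qed
qed

lemma crit_teq: "teq q p \<Longrightarrow> crit L v q \<longleftrightarrow> crit L v p"
proof -
  assume "teq q p"
  hence "\<And>w. amin (w - q) = amin (w - p)" by (rule teq_amin)
  thus ?thesis unfolding crit_def by simp
qed



lemma comp_eJ: "(eJ J :: real^'e::finite) $ i = (if i \<in> J then 1 else 0)"
  by (simp add: eJ_def)

lemma part2_fwd:
  fixes p :: "real^'e::finite"
  assumes two: "\<exists>e f::'e. e \<noteq> f" and C: "crit (UNIV::'e set) (\<lambda>i. - eJ {i}) p"
  shows "\<exists>J. J\<noteq>{} \<and> J\<noteq>UNIV \<and> teq p (- eJ J)"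
proof -
  define w where "w = -p"
  have mem: "m \<in> amin (- eJ {l} - p) \<longleftrightarrow> (\<forall>j. w$m - (if m = l then 1 else 0) \<le> w$j - (if j = l then 1 else 0))" for m l
    by (simp add: amin_mem comp_eJ w_def) (smt (verit))
  obtain z0 where "z0 \<in> amin w" using ex_amin by blast
  hence z0: "\<forall>j. w$z0 \<le> w$j" by (simp add: amin_mem)
  define \<mu> where "\<mu> = w$z0"
  define K where "K = {i. w$i = \<mu> \<or> w$i = \<mu> + 1}"
  have other: "w$m = \<mu>" if "m \<in> amin (- eJ {l} - p)" "m \<noteq> l" for m l
  proof -
    have h: "\<forall>j. w$m - (if m = l then 1 else 0) \<le> w$j - (if j = l then 1 else 0)"
      using that(1) mem by blast
    have "w$m \<le> w$z0 - (if z0 = l then 1 else 0)" using h[rule_format, of z0] that(2) by simp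
    moreover have "w$z0 - (if z0 = l then 1 else 0) \<le> w$z0" by simp
    ultimately have "w$m \<le> \<mu>" unfolding \<mu>_def by linarith
    moreover have "\<mu> \<le> w$m" using z0 unfolding \<mu>_def by blast
    ultimately show ?thesis by linarith
  qed
  have "\<forall>l\<in>UNIV. amin (- eJ {l} - p) \<subseteq> K \<or> amin (- eJ {l} - p) \<inter> K = {}"
  proof
    fix l :: 'e
    show "amin (- eJ {l} - p) \<subseteq> K \<or> amin (- eJ {l} - p) \<inter> K = {}"
    proof (cases "l \<in> K \<or> l \<notin> amin (- eJ {l} - p)")
      case True
      have "amin (- eJ {l} - p) \<subseteq> K"
      proof
        fix m assume m: "m \<in> amin (- eJ {l} - p)"
        show "m \<in> K"
        proof (cases "m = l")
          case True thus ?thesis using m \<open>l \<in> K \<or> l \<notin> amin (- eJ {l} - p)\<close> by simp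
        next
          case False thus ?thesis using other[OF m False] by (simp add: K_def)
        qed
      qed
      thus ?thesis by simp
    next
      case False
      hence lK: "l \<notin> K" and la: "l \<in> amin (- eJ {l} - p)" by auto
      have h: "\<forall>j. w$l - (if l = l then 1 else 0) \<le> w$j - (if j = l then 1 else 0)"
        using la mem by blast
      have "w$l - 1 \<le> w$z0 - (if z0 = l then 1 else 0)" using h[rule_format, of z0] by simp
      moreover have "z0 \<noteq> l" using lK unfolding K_def \<mu>_def by auto
      ultimately have wl: "w$l \<le> \<mu> + 1" unfolding \<mu>_def by simp
      have "amin (- eJ {l} - p) \<subseteq> {l}"
      proof
        fix m assume m: "m \<in> amin (- eJ {l} - p)"
        show "m \<in> {l}"
        proof (rule ccontr)
          assume "m \<notin> {l}"
          hence "m \<noteq> l" by simp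
          hence "w$m = \<mu>" using other m by blast
          moreover have "w$m \<le> w$l - 1"
          proof -
            have h: "\<forall>j. w$m - (if m = l then 1 else 0) \<le> w$j - (if j = l then 1 else 0)"
              using m mem by blast
            show ?thesis using h[rule_format, of l] \<open>m \<noteq> l\<close> by simp
          qed
          moreover have "w$l \<noteq> \<mu> + 1" using lK unfolding K_def by auto
          ultimately show False using wl by linarith
        qed
      qed
      thus ?thesis using lK by auto
    qed
  qed
  moreover have "z0 \<in> K" by (simp add: K_def \<mu>_def)
  ultimately have "K = UNIV" using C[unfolded crit_def, rule_format, of K] by blast
  hence all: "\<forall>i. w$i = \<mu> \<or> w$i = \<mu> + 1" unfolding K_def by (metis (mono_tags) UNIV_I mem_Collect_eq)
  define J where "J = {i. w$i = \<mu> + 1}"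
  have "p = - eJ J + (-\<mu>) *\<^sub>R ones"
  proof (subst vec_eq_iff, rule allI)
    fix i show "p$i = (- eJ J + (-\<mu>) *\<^sub>R ones)$i"
      using all[rule_format, of i] by (auto simp: J_def comp_eJ ones_def w_def)
  qed
  hence teq: "teq p (- eJ J)" unfolding teq_def by (rule exI)
  have "z0 \<notin> J" by (simp add: J_def \<mu>_def)
  hence JU: "J \<noteq> UNIV" by auto
  have "J \<noteq> {}"
  proof
    assume J0: "J = {}"
    hence wmu: "\<forall>i. w$i = \<mu>" using all unfolding J_def by auto
    obtain e f :: 'e where ef: "e \<noteq> f" using two by blast
    have sub: "amin (- eJ {l} - p) \<subseteq> {l}" for l
    proof
      fix m assume m: "m \<in> amin (- eJ {l} - p)"
      show "m \<in> {l}"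
      proof (rule ccontr)
        assume "m \<notin> {l}"
        hence ml: "m \<noteq> l" by simp
        have h: "\<forall>j. w$m - (if m = l then 1 else 0) \<le> w$j - (if j = l then 1 else 0)"
          using m mem by blast
        have "w$m \<le> w$l - 1" using h[rule_format, of l] ml by simp
        thus False using wmu by simp
      qed
    qed
    have "\<forall>l\<in>UNIV. amin (- eJ {l} - p) \<subseteq> {e} \<or> amin (- eJ {l} - p) \<inter> {e} = {}"
      using sub by blast
    hence "{e} = {} \<or> {e} = (UNIV::'e set)" using C[unfolded crit_def, rule_format, of "{e}"] by blast
    thus False using ef by auto
  qed
  thus ?thesis using JU teq by blast
qed

lemma part2_bwd:
  fixes J :: "'e::finite set"
  assumes "J \<noteq> {}" "J \<noteq> UNIV"
  shows "crit (UNIV::'e set) (\<lambda>i. - eJ {i}) (- eJ J)"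
  unfolding crit_def
proof (intro allI impI)
  fix K assume KP: "\<forall>l\<in>UNIV. amin (- eJ {l} - - eJ J) \<subseteq> K \<or> amin (- eJ {l} - - eJ J) \<inter> K = {}"
  have key: "l \<in> amin (- eJ {l} - - eJ J) \<and> j \<in> amin (- eJ {l} - - eJ J)" if "l \<in> J" "j \<notin> J" for l j
    using that by (auto simp: amin_mem comp_eJ)
  obtain l0 where l0: "l0 \<in> J" using assms by auto
  obtain j0 where j0: "j0 \<notin> J" using assms by auto
  show "K = {} \<or> K = UNIV"
  proof (cases "j0 \<in> K")
    case True
    have sub: "amin (- eJ {l} - - eJ J) \<subseteq> K" if "l \<in> J" for l
    proof -
      have "amin (- eJ {l} - - eJ J) \<subseteq> K \<or> amin (- eJ {l} - - eJ J) \<inter> K = {}"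
        using KP by simp
      thus ?thesis using key[OF that j0] True by auto
    qed
    have "i \<in> K" for i
    proof (cases "i \<in> J")
      case True thus ?thesis using sub[OF True] key[OF True j0] by auto
    next
      case False thus ?thesis using sub[OF l0] key[OF l0 False] by auto
    qed
    hence "\<forall>i. i \<in> K" by blast
    thus ?thesis by auto
  next
    case False
    have sub: "amin (- eJ {l} - - eJ J) \<inter> K = {}" if "l \<in> J" for l
    proof -
      have "amin (- eJ {l} - - eJ J) \<subseteq> K \<or> amin (- eJ {l} - - eJ J) \<inter> K = {}"
        using KP by simp
      thus ?thesis using key[OF that j0] False by auto
    qed
    have "i \<notin> K" for i
    proof (cases "i \<in> J")
      case True thus ?thesis using sub[OF True] key[OF True j0] by auto
    next
      case False thus ?thesis using sub[OF l0] key[OF l0 False] by auto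
    qed
    hence "\<forall>i. i \<notin> K" by blast
    thus ?thesis by auto
  qed
qed



lemma part1_fwd:
  fixes p :: "real^'e::finite" and b :: "'i \<Rightarrow> 'e set"
  assumes C: "crit L (\<lambda>l. - eJ (b l)) p"
  shows "\<exists>I\<subseteq>L. teq p (- eJ (\<Union>i\<in>I. b i))"
proof -
  define w where "w = -p"
  have mem: "m \<in> amin (- eJ B - p) \<longleftrightarrow> (\<forall>j. w$m - (if m \<in> B then 1 else 0) \<le> w$j - (if j \<in> B then 1 else 0))" for m B
    by (simp add: amin_mem comp_eJ w_def) (smt (verit))
  obtain z0 where "z0 \<in> amin w" using ex_amin by blast
  hence z0: "\<forall>j. w$z0 \<le> w$j" by (simp add: amin_mem)
  define \<mu> where "\<mu> = w$z0"
  have ge: "\<mu> \<le> w$i" for i using z0 by (simp add: \<mu>_def)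
  have Cr: "K = {} \<or> K = UNIV" if "\<forall>l\<in>L. amin (- eJ (b l) - p) \<subseteq> K \<or> amin (- eJ (b l) - p) \<inter> K = {}" for K
    using C[unfolded crit_def, rule_format, of K] that by blast
  have h: "w$m - (if m \<in> b l then 1 else 0) \<le> w$j - (if j \<in> b l then 1 else 0)"
    if "m \<in> amin (- eJ (b l) - p)" for m l j
    using that mem by blast
  define K1 where "K1 = {i. w$i \<le> \<mu> + 1}"
  have "\<forall>l\<in>L. amin (- eJ (b l) - p) \<subseteq> K1 \<or> amin (- eJ (b l) - p) \<inter> K1 = {}"
  proof (intro ballI disjI1 subsetI)
    fix l m assume m: "m \<in> amin (- eJ (b l) - p)"
    have "w$m - (if m \<in> b l then 1 else 0) \<le> w$z0 - (if z0 \<in> b l then 1 else 0)" by (rule h[OF m])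
    thus "m \<in> K1" unfolding K1_def \<mu>_def by (simp split: if_splits)
  qed
  moreover have "z0 \<in> K1" by (simp add: K1_def \<mu>_def)
  ultimately have "K1 = UNIV" using Cr by blast
  hence le1: "w$i \<le> \<mu> + 1" for i unfolding K1_def by (metis (mono_tags) UNIV_I mem_Collect_eq)
  define K2 where "K2 = {i. w$i = \<mu> \<or> w$i = \<mu> + 1}"
  have "\<forall>l\<in>L. amin (- eJ (b l) - p) \<subseteq> K2 \<or> amin (- eJ (b l) - p) \<inter> K2 = {}"
  proof
    fix l assume "l \<in> L"
    show "amin (- eJ (b l) - p) \<subseteq> K2 \<or> amin (- eJ (b l) - p) \<inter> K2 = {}"
    proof (cases "amin (- eJ (b l) - p) \<inter> K2 = {}")
      case False
      then obtain i where i: "i \<in> amin (- eJ (b l) - p)" "i \<in> K2" by blast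
      have "amin (- eJ (b l) - p) \<subseteq> K2"
      proof
        fix m assume m: "m \<in> amin (- eJ (b l) - p)"
        have "w$m - (if m \<in> b l then 1 else 0) \<le> w$i - (if i \<in> b l then 1 else 0)" by (rule h[OF m])
        moreover have "w$i - (if i \<in> b l then 1 else 0) \<le> w$m - (if m \<in> b l then 1 else 0)" by (rule h[OF i(1)])
        moreover note ge[of m] le1[of m]
        moreover have "w$i = \<mu> \<or> w$i = \<mu> + 1" using i(2) by (simp add: K2_def)
        ultimately show "m \<in> K2" unfolding K2_def by (simp split: if_splits; linarith)
      qed
      thus ?thesis by simp
    qed simp
  qed
  moreover have "z0 \<in> K2" by (simp add: K2_def \<mu>_def)
  ultimately have "K2 = UNIV" using Cr by blast
  hence two: "w$i = \<mu> \<or> w$i = \<mu> + 1" for i unfolding K2_def by (metis (mono_tags) UNIV_I mem_Collect_eq)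
  define J where "J = {i. w$i = \<mu> + 1}"
  have z0J: "z0 \<notin> J" by (simp add: J_def \<mu>_def)
  define K3 where "K3 = {i. w$i = \<mu>} \<union> (\<Union>l\<in>{l\<in>L. b l \<subseteq> J}. b l)"
  have "\<forall>l\<in>L. amin (- eJ (b l) - p) \<subseteq> K3 \<or> amin (- eJ (b l) - p) \<inter> K3 = {}"
  proof (intro ballI disjI1 subsetI)
    fix l m assume l: "l \<in> L" and m: "m \<in> amin (- eJ (b l) - p)"
    show "m \<in> K3"
    proof (cases "b l \<subseteq> J")
      case True
      show ?thesis
      proof (cases "m \<in> b l")
        case True thus ?thesis using \<open>b l \<subseteq> J\<close> l unfolding K3_def by blast
      next
        case False
        have "z0 \<notin> b l" using z0J True by blast
        hence "w$m \<le> \<mu>" using h[OF m, of z0] False by (simp add: \<mu>_def)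
        thus ?thesis using ge[of m] unfolding K3_def by simp
      qed
    next
      case False
      then obtain e where e: "e \<in> b l" "e \<notin> J" by blast
      hence "w$e = \<mu>" using two[of e] by (auto simp: J_def)
      hence "w$m \<le> \<mu>" using h[OF m, of e] e(1) by (simp split: if_splits)
      thus ?thesis using ge[of m] unfolding K3_def by simp
    qed
  qed
  moreover have "z0 \<in> K3" by (simp add: K3_def \<mu>_def)
  ultimately have "K3 = UNIV" using Cr by blast
  define I where "I = {l\<in>L. b l \<subseteq> J}"
  have "(\<Union>i\<in>I. b i) = J"
  proof
    show "(\<Union>i\<in>I. b i) \<subseteq> J" unfolding I_def by blast
  next
    show "J \<subseteq> (\<Union>i\<in>I. b i)"
    proof
      fix i assume "i \<in> J"
      hence "w$i \<noteq> \<mu>" by (simp add: J_def)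
      moreover have "i \<in> K3" using \<open>K3 = UNIV\<close> by simp
      ultimately show "i \<in> (\<Union>i\<in>I. b i)" unfolding K3_def I_def by blast
    qed
  qed
  moreover have "p = - eJ J + (-\<mu>) *\<^sub>R ones"
  proof (subst vec_eq_iff, rule allI)
    fix i show "p$i = (- eJ J + (-\<mu>) *\<^sub>R ones)$i"
      using two[of i] by (auto simp: J_def comp_eJ ones_def w_def)
  qed
  hence "teq p (- eJ J)" unfolding teq_def by (rule exI)
  moreover have "I \<subseteq> L" by (simp add: I_def)
  ultimately show ?thesis by auto
qed

lemma part1_bwd:
  fixes b :: "'i \<Rightarrow> 'e::finite set"
  assumes G: "\<forall>e f. e \<noteq> f \<longrightarrow> (\<exists>l\<in>L. e \<in> b l \<and> f \<in> b l)" and IL: "I \<subseteq> L"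
  shows "crit L (\<lambda>l. - eJ (b l)) (- eJ (\<Union>i\<in>I. b i))"
  unfolding crit_def
proof (intro allI impI)
  define J where "J = (\<Union>i\<in>I. b i)"
  fix K assume KP0: "\<forall>l\<in>L. amin (- eJ (b l) - - eJ (\<Union>i\<in>I. b i)) \<subseteq> K \<or> amin (- eJ (b l) - - eJ (\<Union>i\<in>I. b i)) \<inter> K = {}"
  hence KP: "amin (- eJ (b l) - - eJ J) \<subseteq> K \<or> amin (- eJ (b l) - - eJ J) \<inter> K = {}" if "l \<in> L" for l
    using that unfolding J_def by blast
  have mem: "m \<in> amin (- eJ B - - eJ J) \<longleftrightarrow> (\<forall>j. (if m \<in> J then 1 else 0) - (if m \<in> B then 1 else 0) \<le> (if j \<in> J then 1 else 0) - (if j \<in> B then (1::real) else 0))" for m B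
    by (simp add: amin_mem comp_eJ; smt (verit))
  show "K = {} \<or> K = UNIV"
  proof (cases "J = {} \<or> J = UNIV")
    case True
    have sub: "b l \<subseteq> amin (- eJ (b l) - - eJ J)" for l
    proof
      fix x assume "x \<in> b l"
      thus "x \<in> amin (- eJ (b l) - - eJ J)" unfolding mem using True by auto
    qed
    show ?thesis
    proof (rule ccontr)
      assume "\<not> (K = {} \<or> K = UNIV)"
      then obtain e f where e: "e \<in> K" and f: "f \<notin> K" by auto
      hence "e \<noteq> f" by auto
      then obtain l where l: "l \<in> L" "e \<in> b l" "f \<in> b l" using G by blast
      show False using KP[OF l(1)] sub[of l] l e f by blast
    qed
  next
    case False
    then obtain j0 where j0: "j0 \<notin> J" by auto
    from False obtain i0 where "i0 \<in> J" by auto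
    then obtain l0 where l0: "l0 \<in> I" "i0 \<in> b l0" unfolding J_def by blast
    have key: "b l \<subseteq> amin (- eJ (b l) - - eJ J) \<and> - J \<subseteq> amin (- eJ (b l) - - eJ J)" if "l \<in> I" for l
    proof -
      have blJ: "b l \<subseteq> J" using that unfolding J_def by blast
      have "x \<in> amin (- eJ (b l) - - eJ J)" if "x \<in> b l \<or> x \<notin> J" for x
        unfolding mem using blJ that by auto
      thus ?thesis by blast
    qed
    show ?thesis
    proof (cases "j0 \<in> K")
      case True
      have sub: "amin (- eJ (b l) - - eJ J) \<subseteq> K" if "l \<in> I" for l
        using KP[of l] that IL key[OF that] j0 True by blast
      have "i \<in> K" for i
      proof (cases "i \<in> J")
        case True
        then obtain l where "l \<in> I" "i \<in> b l" unfolding J_def by blast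
        thus ?thesis using sub key by blast
      next
        case False thus ?thesis using sub[OF l0(1)] key[OF l0(1)] by blast
      qed
      thus ?thesis by auto
    next
      case False
      have sub: "amin (- eJ (b l) - - eJ J) \<inter> K = {}" if "l \<in> I" for l
        using KP[of l] that IL key[OF that] j0 False by blast
      have "i \<notin> K" for i
      proof (cases "i \<in> J")
        case True
        then obtain l where "l \<in> I" "i \<in> b l" unfolding J_def by blast
        thus ?thesis using sub key by blast
      next
        case False thus ?thesis using sub[OF l0(1)] key[OF l0(1)] by blast
      qed
      thus ?thesis by auto
    qed
  qed
qed



lemma amin_JB:
  fixes B J :: "'e::finite set"
  assumes "B \<noteq> {}"
  shows "amin (- eJ B - - eJ J) = (if B \<subseteq> J then B \<union> - J else B - J)"
proof -
  have mem: "m \<in> amin (- eJ B - - eJ J) \<longleftrightarrow> (\<forall>j. (if m \<in> J then 1 else 0) - (if m \<in> B then 1 else 0) \<le> (if j \<in> J then 1 else 0) - (if j \<in> B then (1::real) else 0))" for m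
    by (simp add: amin_mem comp_eJ; smt (verit))
  show ?thesis
  proof (cases "B \<subseteq> J")
    case True
    obtain e where e: "e \<in> B" using assms by auto
    have "m \<in> amin (- eJ B - - eJ J) \<longleftrightarrow> m \<in> B \<union> - J" for m
    proof
      assume "m \<in> amin (- eJ B - - eJ J)"
      hence "(if m \<in> J then 1 else 0) - (if m \<in> B then 1 else 0) \<le> (if e \<in> J then 1 else 0) - (if e \<in> B then (1::real) else 0)"
        unfolding mem by blast
      thus "m \<in> B \<union> - J" using e True by (auto split: if_splits)
    next
      assume "m \<in> B \<union> - J"
      thus "m \<in> amin (- eJ B - - eJ J)" unfolding mem using True by auto
    qed
    thus ?thesis using True by auto
  next
    case False
    then obtain e where e: "e \<in> B" "e \<notin> J" by auto
    have "m \<in> amin (- eJ B - - eJ J) \<longleftrightarrow> m \<in> B - J" for m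
    proof
      assume "m \<in> amin (- eJ B - - eJ J)"
      hence "(if m \<in> J then 1 else 0) - (if m \<in> B then 1 else 0) \<le> (if e \<in> J then 1 else 0) - (if e \<in> B then (1::real) else 0)"
        unfolding mem by blast
      thus "m \<in> B - J" using e by (auto split: if_splits)
    next
      assume "m \<in> B - J"
      thus "m \<in> amin (- eJ B - - eJ J)" unfolding mem by auto
    qed
    thus ?thesis using False by auto
  qed
qed

lemma amin_B0:
  fixes B :: "'e::finite set"
  assumes "B \<noteq> {}"
  shows "amin (- eJ B - 0) = B"
proof -
  have "(0::real^'e) = - eJ {}" by (simp add: vec_eq_iff comp_eJ)
  hence "amin (- eJ B - 0) = amin (- eJ B - - eJ {})" by simp
  also have "\<dots> = B" using amin_JB[OF assms, of "{}"] assms by auto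
  finally show ?thesis .
qed

lemma part3:
  fixes b :: "'i \<Rightarrow> 'e::finite set"
  assumes ne: "\<forall>l\<in>L. b l \<noteq> {}"
  shows "ttype L (\<lambda>l. - eJ (b l)) (- eJ J) =
         (\<lambda>j. let T0 = ttype L (\<lambda>l. - eJ (b l)) 0 in
            if j \<in> J then T0 j - (\<Union>i \<in> UNIV - J. T0 i)
            else T0 j \<union> (L \<inter> (\<Inter>i \<in> UNIV - J. L - T0 i)))"
proof -
  have T0: "ttype L (\<lambda>l. - eJ (b l)) 0 = (\<lambda>j. {l\<in>L. j \<in> b l})"
  proof (rule ext)
    fix j show "ttype L (\<lambda>l. - eJ (b l)) 0 j = {l\<in>L. j \<in> b l}"
      unfolding ttype_alt
    proof (rule Collect_cong)
      fix l show "(l \<in> L \<and> j \<in> amin (- eJ (b l) - 0)) = (l \<in> L \<and> j \<in> b l)"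
        using amin_B0[of "b l"] ne by auto
    qed
  qed
  have TJ: "ttype L (\<lambda>l. - eJ (b l)) (- eJ J) = (\<lambda>j. {l\<in>L. j \<in> (if b l \<subseteq> J then b l \<union> - J else b l - J)})"
  proof (rule ext)
    fix j show "ttype L (\<lambda>l. - eJ (b l)) (- eJ J) j = {l\<in>L. j \<in> (if b l \<subseteq> J then b l \<union> - J else b l - J)}"
      unfolding ttype_alt
    proof (rule Collect_cong)
      fix l show "(l \<in> L \<and> j \<in> amin (- eJ (b l) - - eJ J)) = (l \<in> L \<and> j \<in> (if b l \<subseteq> J then b l \<union> - J else b l - J))"
        using amin_JB[of "b l" J] ne by (auto split: if_splits)
    qed
  qed
  show ?thesis unfolding T0 TJ Let_def
    by (auto simp: fun_eq_iff)
qed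

lemma no_cycle_aux:
  assumes S: "simple_graph Vx ends" and gh: "g \<noteq> h" and Csub: "C \<subseteq> {g, h}"
    and gC: "g \<in> C" and cyc: "is_cycle ends C"
  shows False
proof -
  have c2: "card (ends g) = 2" and inj: "inj ends" using S by (auto simp: simple_graph_def)
  have ch: "card (ends h) = 2" using S by (auto simp: simple_graph_def)
  have inh: "z \<in> ends h" if z: "z \<in> ends g" for z
  proof -
    let ?S = "{c \<in> C. z \<in> ends c}"
    have fin: "finite ?S" using Csub by (auto intro: finite_subset)
    have "g \<in> ?S" using gC z by simp
    hence "card ?S \<noteq> 0" using fin by auto
    hence "card ?S = 2" using cyc unfolding is_cycle_def degree_in_def by metis
    moreover have "?S \<subseteq> {g, h}" using Csub by auto
    moreover have "card {g, h} = 2" using gh by simp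
    ultimately have "?S = {g, h}" using card_subset_eq[of "{g,h}" ?S] by simp
    thus ?thesis by auto
  qed
  have "ends g \<subseteq> ends h" using inh by blast
  moreover have "finite (ends h)" using ch by (metis card.infinite zero_neq_numeral)
  ultimately have "ends g = ends h" using card_subset_eq c2 ch by metis
  hence "g = h" using inj by (simp add: inj_eq)
  thus False using gh by simp
qed

lemma indep2:
  assumes S: "simple_graph Vx ends" and ef: "(e::'e::finite) \<noteq> f"
  shows "graphic_indep ends {e, f}"
  unfolding graphic_indep_def
proof
  assume "\<exists>C\<subseteq>{e, f}. is_cycle ends C"
  then obtain C where C: "C \<subseteq> {e, f}" "is_cycle ends C" by blast
  hence "C \<noteq> {}" by (simp add: is_cycle_def)
  hence "e \<in> C \<or> f \<in> C" using C(1) by auto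
  thus False
  proof
    assume "e \<in> C" thus False using no_cycle_aux[OF S ef C(1)] C(2) by blast
  next
    assume "f \<in> C"
    moreover have "C \<subseteq> {f, e}" using C(1) by auto
    ultimately show False using no_cycle_aux[OF S ef[symmetric]] C(2) by blast
  qed
qed

lemma ext_basis:
  fixes ends :: "'e::finite \<Rightarrow> 'v set"
  assumes "graphic_indep ends S"
  shows "\<exists>B. graphic_basis ends B \<and> S \<subseteq> B"
proof -
  define F where "F = {X. S \<subseteq> X \<and> graphic_indep ends X}"
  have finF: "finite (card ` F)" by simp
  have "S \<in> F" using assms by (simp add: F_def)
  hence neF: "card ` F \<noteq> {}" by auto
  have "Max (card ` F) \<in> card ` F" using finF neF by (rule Max_in)
  then obtain X where X: "X \<in> F" "card X = Max (card ` F)" by auto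
  have maxX: "card Y \<le> card X" if "Y \<in> F" for Y
    using X(2) finF that by simp
  have "graphic_basis ends X"
    unfolding graphic_basis_def
  proof (intro conjI allI impI)
    show "graphic_indep ends X" using X(1) by (simp add: F_def)
  next
    fix Y assume XY: "X \<subset> Y"
    show "\<not> graphic_indep ends Y"
    proof
      assume "graphic_indep ends Y"
      hence "Y \<in> F" using XY X(1) by (auto simp: F_def)
      hence "card Y \<le> card X" by (rule maxX)
      moreover have "card X < card Y" using XY by (simp add: psubset_card_mono)
      ultimately show False by simp
    qed
  qed
  thus ?thesis using X(1) by (auto simp: F_def)
qed

lemma two_edges:
  fixes ends :: "'e::finite \<Rightarrow> 'v set"
  assumes S: "simple_graph Vx ends" and nb: "\<forall>e. \<not> is_bridge Vx ends e"
  shows "\<exists>e f::'e. e \<noteq> f"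
proof (rule ccontr)
  assume "\<not> (\<exists>e f::'e. e \<noteq> f)"
  hence all: "\<And>e f::'e. e = f" by blast
  obtain e :: 'e where True by blast
  have "card (ends e) = 2" "ends e \<subseteq> Vx" using S by (auto simp: simple_graph_def)
  then obtain x y where xy: "ends e = {x, y}" "x \<noteq> y" "x \<in> Vx" "y \<in> Vx"
    by (auto simp: card_2_iff)
  have "(x, y) \<in> adj ends UNIV" using xy by (auto simp: adj_def)
  hence c1: "conn ends UNIV x y" by (auto simp: conn_def)
  have E0: "UNIV - {e} = {}" using all by auto
  have "adj ends (UNIV - {e}) = {}" by (simp only: E0) (simp add: adj_def)
  hence "\<not> conn ends (UNIV - {e}) x y" using xy by (simp add: conn_def)
  hence "is_bridge Vx ends e" using c1 xy unfolding is_bridge_def by blast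
  thus False using nb by blast
qed

lemma basis_ne:
  fixes ends :: "'e::finite \<Rightarrow> 'v set"
  assumes S: "simple_graph Vx ends" and two: "\<exists>e f::'e. e \<noteq> f" and B: "graphic_basis ends B"
  shows "B \<noteq> {}"
proof
  assume B0: "B = {}"
  obtain e f :: 'e where ef: "e \<noteq> f" using two by blast
  have "graphic_indep ends {e, f}" by (rule indep2[OF S ef])
  hence "graphic_indep ends {e}" unfolding graphic_indep_def by blast
  moreover have "B \<subset> {e}" using B0 by auto
  ultimately show False using B unfolding graphic_basis_def by blast
qed


theorem mainTheorem7:
  fixes Vx :: "'v set" and ends :: "'e::finite \<Rightarrow> 'v set"
    and n :: nat and b :: "nat \<Rightarrow> 'e set"
  assumes simple: "simple_graph Vx ends"
    and conn: "connected_graph Vx ends"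
    and bridgeless: "\<forall>e. \<not> is_bridge Vx ends e"
    and bases: "bij_betw b {1..n} {B. graphic_basis ends B}"
  defines "V \<equiv> (\<lambda>l. - eJ (b l))"
  shows
    "({p. pseudovertex {1..n} V p}
       = {p. \<exists>I \<subseteq> {1..n}. teq p (- eJ (\<Union>i\<in>I. b i))})
    \<and> ({p. pseudovertex (UNIV :: 'e set) (\<lambda>i. - eJ {i}) p}
       = {p. \<exists>J :: 'e set. J \<noteq> {} \<and> J \<noteq> UNIV \<and> teq p (- eJ J)})
    \<and> (\<forall>J. pseudovertex {1..n} V (- eJ J) \<longrightarrow>
       ttype {1..n} V (- eJ J) =
         (\<lambda>j. let T0 = ttype {1..n} V 0 in
            if j \<in> J then T0 j - (\<Union>i \<in> UNIV - J. T0 i)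
            else T0 j \<union> ({1..n} \<inter> (\<Inter>i \<in> UNIV - J. {1..n} - T0 i))))"
  unfolding V_def
proof (intro conjI)
  have fin: "finite {1..n}" by simp
  have two: "\<exists>e f::'e. e \<noteq> f" by (rule two_edges[OF simple bridgeless])
  have surj: "b ` {1..n} = {B. graphic_basis ends B}" using bases by (simp add: bij_betw_def)
  have ne: "\<forall>l\<in>{1..n}. b l \<noteq> {}"
  proof
    fix l assume "l \<in> {1..n}"
    hence "graphic_basis ends (b l)" using surj by blast
    thus "b l \<noteq> {}" by (rule basis_ne[OF simple two])
  qed
  have G: "\<forall>e f. e \<noteq> f \<longrightarrow> (\<exists>l\<in>{1..n}. e \<in> b l \<and> f \<in> b l)"
  proof (intro allI impI)
    fix e f :: 'e assume ef: "e \<noteq> f"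
    obtain B where B: "graphic_basis ends B" "{e, f} \<subseteq> B"
      using ext_basis[OF indep2[OF simple ef]] by blast
    have "B \<in> b ` {1..n}" using B(1) surj by simp
    then obtain l where "l \<in> {1..n}" "b l = B" by auto
    thus "\<exists>l\<in>{1..n}. e \<in> b l \<and> f \<in> b l" using B(2) by auto
  qed
  show "{p. pseudovertex {1..n} (\<lambda>l. - eJ (b l)) p}
       = {p. \<exists>I \<subseteq> {1..n}. teq p (- eJ (\<Union>i\<in>I. b i))}"
  proof (rule Collect_cong)
    fix p :: "real^'e"
    show "pseudovertex {1..n} (\<lambda>l. - eJ (b l)) p \<longleftrightarrow> (\<exists>I \<subseteq> {1..n}. teq p (- eJ (\<Union>i\<in>I. b i)))"
    proof
      assume "pseudovertex {1..n} (\<lambda>l. - eJ (b l)) p"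
      hence "crit {1..n} (\<lambda>l. - eJ (b l)) p" using PV_crit[OF fin] by blast
      thus "\<exists>I \<subseteq> {1..n}. teq p (- eJ (\<Union>i\<in>I. b i))" by (rule part1_fwd)
    next
      assume "\<exists>I \<subseteq> {1..n}. teq p (- eJ (\<Union>i\<in>I. b i))"
      then obtain I where I: "I \<subseteq> {1..n}" "teq p (- eJ (\<Union>i\<in>I. b i))" by blast
      have "crit {1..n} (\<lambda>l. - eJ (b l)) (- eJ (\<Union>i\<in>I. b i))" by (rule part1_bwd[OF G I(1)])
      hence "crit {1..n} (\<lambda>l. - eJ (b l)) p" using crit_teq[OF I(2)] by blast
      thus "pseudovertex {1..n} (\<lambda>l. - eJ (b l)) p" using PV_crit[OF fin] by blast
    qed
  qed
  show "{p. pseudovertex (UNIV :: 'e set) (\<lambda>i. - eJ {i}) p}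
       = {p. \<exists>J :: 'e set. J \<noteq> {} \<and> J \<noteq> UNIV \<and> teq p (- eJ J)}"
  proof (rule Collect_cong)
    fix p :: "real^'e"
    have finU: "finite (UNIV :: 'e set)" by simp
    show "pseudovertex (UNIV :: 'e set) (\<lambda>i. - eJ {i}) p \<longleftrightarrow> (\<exists>J :: 'e set. J \<noteq> {} \<and> J \<noteq> UNIV \<and> teq p (- eJ J))"
    proof
      assume "pseudovertex (UNIV :: 'e set) (\<lambda>i. - eJ {i}) p"
      hence "crit (UNIV :: 'e set) (\<lambda>i. - eJ {i}) p" using PV_crit[OF finU] by blast
      thus "\<exists>J :: 'e set. J \<noteq> {} \<and> J \<noteq> UNIV \<and> teq p (- eJ J)" by (rule part2_fwd[OF two])
    next
      assume "\<exists>J :: 'e set. J \<noteq> {} \<and> J \<noteq> UNIV \<and> teq p (- eJ J)"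
      then obtain J :: "'e set" where J: "J \<noteq> {}" "J \<noteq> UNIV" "teq p (- eJ J)" by blast
      have "crit (UNIV :: 'e set) (\<lambda>i. - eJ {i}) (- eJ J)" by (rule part2_bwd[OF J(1,2)])
      hence "crit (UNIV :: 'e set) (\<lambda>i. - eJ {i}) p" using crit_teq[OF J(3)] by blast
      thus "pseudovertex (UNIV :: 'e set) (\<lambda>i. - eJ {i}) p" using PV_crit[OF finU] by blast
    qed
  qed
  show "\<forall>J. pseudovertex {1..n} (\<lambda>l. - eJ (b l)) (- eJ J) \<longrightarrow>
       ttype {1..n} (\<lambda>l. - eJ (b l)) (- eJ J) =
         (\<lambda>j. let T0 = ttype {1..n} (\<lambda>l. - eJ (b l)) 0 in
            if j \<in> J then T0 j - (\<Union>i \<in> UNIV - J. T0 i)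
            else T0 j \<union> ({1..n} \<inter> (\<Inter>i \<in> UNIV - J. {1..n} - T0 i)))"
    using part3[OF ne] by blast
qed

end
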